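(* Let $k>1$ be an integer. Every vertex $v$ of $\mathcal F_k$ is a cut vertex: deleting $v$ (and its incident edges) from the connected component of $\mathcal F_k$ containing $v$ leaves a disconnected graph.
   Context: The vertex set $V$ consists of all reduced fractions $p/q$ with $p,q\in\mathbb Z$, $\gcd(p,q)=1$, together with $1/0$; here $p/q$ and $(-p)/(-q)$ denote the same vertex. For vertices define $d(p/q,a/b)=|pb-qa|$. The graph $\mathcal F_k$ has vertex set $V$, with an edge between $p/q$ and $a/b$ exactly when $d(p/q,a/b)=k$. *)

theory Defs
  imports Main
begin

text \<open>Vertices of the Farey-type graph: reduced fractions p/q, with the identification
  p/q = (-p)/(-q), represented by the normalized pair (p,q) with q > 0, or (1,0) for 1/0.\<close>
definition Fverts :: "(int \<times> int) set" where
  "Fverts = {(p, q). coprime p q \<and> (0 < q \<or> (q = 0 \<and> p = 1))}"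

definition fdist :: "int \<times> int \<Rightarrow> int \<times> int \<Rightarrow> int" where
  "fdist x y = \<bar>fst x * snd y - snd x * fst y\<bar>"

definition Fadj :: "int \<Rightarrow> int \<times> int \<Rightarrow> int \<times> int \<Rightarrow> bool" where
  "Fadj k x y \<longleftrightarrow> x \<in> Fverts \<and> y \<in> Fverts \<and> fdist x y = k"

definition conn_in :: "int \<Rightarrow> (int \<times> int) set \<Rightarrow> int \<times> int \<Rightarrow> int \<times> int \<Rightarrow> bool" where
  "conn_in k S = (\<lambda>x y. Fadj k x y \<and> x \<in> S \<and> y \<in> S)\<^sup>*\<^sup>*"

definition Fcomponent :: "int \<Rightarrow> int \<times> int \<Rightarrow> (int \<times> int) set" where
  "Fcomponent k v = {w. conn_in k Fverts v w}"

end

theory Submission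
  imports Defs
begin

lemma core:
  fixes P1 Q1 P2 Q2 k :: int
  assumes k: "k > 1" and c1: "coprime P1 Q1" and c2: "coprime P2 Q2"
    and q1: "Q1 > 0" and q2: "Q2 > 0" and kd: "k dvd Q1" and p1: "0 < P1" "P1 < Q1"
    and e: "\<bar>P1*Q2 - Q1*P2\<bar> = k"
  shows "k dvd Q2 \<and> 0 < P2 \<and> P2 < Q2"
proof -
  have ck: "coprime P1 k" using coprime_divisors[OF dvd_refl kd c1] .
  have "k dvd P1*Q2 - Q1*P2" using e by (metis dvd_abs_iff dvd_refl)
  then have "k dvd P1*Q2" using kd by (metis dvd_diff_commute dvd_mult2 dvd_add_left_iff diff_add_cancel)
  then have kq2: "k dvd Q2" using ck by (metis coprime_commute coprime_dvd_mult_right_iff)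
  obtain a where a: "Q1 = k*a" using kd by blast
  obtain b where b: "Q2 = k*b" using kq2 by blast
  have apos: "a > 0" using a q1 k by (simp add: zero_less_mult_iff)
  have bpos: "b > 0" using b q2 k by (simp add: zero_less_mult_iff)
  have "P1*Q2 - Q1*P2 = k*(P1*b - a*P2)" using a b by (simp add: algebra_simps)
  then have e2: "\<bar>P1*b - a*P2\<bar> = 1" using e k by (simp add: abs_mult)
  have "0 < P2"
  proof (rule ccontr)
    assume "\<not> 0 < P2"
    then have "a*P2 \<le> 0" using apos by (simp add: mult_nonneg_nonpos)
    moreover have "P1*b \<ge> 1" using p1 bpos by (smt (verit) mult_le_cancel_left1)
    ultimately have "P1*b - a*P2 = 1" "a*P2 = 0" using e2 by linarith+
    then have "P2 = 0" using apos by simp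
    then have "Q2 = 1" using c2 q2 by simp
    then show False using kq2 k by (smt (verit) zdvd_imp_le)
  qed
  moreover have "P2 < Q2"
  proof (rule ccontr)
    assume "\<not> P2 < Q2"
    then have "a*P2 \<ge> a*(k*b)" using apos b by simp
    moreover have "b*(k*a - P1) \<ge> 1" using p1 a bpos by (smt (verit) mult_le_cancel_left1)
    ultimately have "a*P2 - P1*b \<ge> 1" by (simp add: algebra_simps)
    then have "a*P2 - P1*b = 1" "a*P2 = a*(k*b)" using e2 \<open>b*(k*a - P1) \<ge> 1\<close> \<open>a*P2 \<ge> a*(k*b)\<close>
      by (simp_all add: algebra_simps)
    then have "P2 = Q2" using apos b by simp
    then have "Q2 = 1" using c2 q2 by simp
    then show False using kq2 k by (smt (verit) zdvd_imp_le)
  qed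
  ultimately show ?thesis using kq2 by simp
qed


lemma signnorm:
  fixes P Q :: int
  assumes "Q \<noteq> 0"
  shows "(0 < P*Q \<and> P*Q < Q^2) \<longleftrightarrow>
         (if Q > 0 then 0 < P \<and> P < Q else 0 < -P \<and> -P < -Q)"
proof (cases "Q > 0")
  case True
  then show ?thesis by (simp add: zero_less_mult_iff power2_eq_square mult_less_cancel_right)
next
  case False
  then have "Q < 0" using assms by simp
  then show ?thesis by (simp add: zero_less_mult_iff power2_eq_square mult_less_cancel_right)
qed

lemma step_inv:
  fixes P1 Q1 P2 Q2 k :: int
  assumes k: "k > 1" and c1: "coprime P1 Q1" and c2: "coprime P2 Q2"
    and q2: "Q2 \<noteq> 0" and kd: "k dvd Q1" and i1: "0 < P1*Q1" "P1*Q1 < Q1^2"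
    and e: "\<bar>P1*Q2 - Q1*P2\<bar> = k"
  shows "k dvd Q2 \<and> 0 < P2*Q2 \<and> P2*Q2 < Q2^2"
proof -
  have q1: "Q1 \<noteq> 0" using i1 by auto
  obtain P1' Q1' where A: "Q1' > 0" "0 < P1'" "P1' < Q1'" "coprime P1' Q1'" "k dvd Q1'"
      "\<bar>P1'*Q2 - Q1'*P2\<bar> = k"
  proof (cases "Q1 > 0")
    case True
    then show ?thesis using that[of Q1 P1] signnorm[OF q1, of P1] i1 c1 kd e by simp
  next
    case False
    have "\<bar>(-P1)*Q2 - (-Q1)*P2\<bar> = k" using e by (simp add: abs_minus_commute)
    then show ?thesis using False that[of "-Q1" "-P1"] signnorm[OF q1, of P1] i1 c1 kd e by simp
  qed
  show ?thesis
  proof (cases "Q2 > 0")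
    case True
    then show ?thesis using core[OF k A(4) c2 A(1) True A(5) A(2) A(3) A(6)] signnorm[OF q2, of P2] by simp
  next
    case False
    have e': "\<bar>P1'*(-Q2) - Q1'*(-P2)\<bar> = k" using A(6) by (simp add: abs_minus_commute)
    have "-Q2 > 0" using False q2 by simp
    from core[OF k A(4) _ A(1) this A(5) A(2) A(3) e'] c2
    show ?thesis using False signnorm[OF q2, of P2] by simp
  qed
qed

definition Pf :: "int \<Rightarrow> int \<Rightarrow> int \<times> int \<Rightarrow> int" where
  "Pf a b x = b * fst x - a * snd x"
definition Qf :: "int \<Rightarrow> int \<Rightarrow> int \<times> int \<Rightarrow> int" where
  "Qf r s x = r * snd x - s * fst x"

lemma recon:
  assumes d: "r*b - a*s = 1"
  shows "fst x = r * Pf a b x + a * Qf r s x" "snd x = s * Pf a b x + b * Qf r s x"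
proof -
  have "r * Pf a b x + a * Qf r s x = (r*b - a*s) * fst x"
    unfolding Pf_def Qf_def by (simp add: algebra_simps)
  then show "fst x = r * Pf a b x + a * Qf r s x" using d by simp
  have "s * Pf a b x + b * Qf r s x = (r*b - a*s) * snd x"
    unfolding Pf_def Qf_def by (simp add: algebra_simps)
  then show "snd x = s * Pf a b x + b * Qf r s x" using d by simp
qed

lemma coprime_PQ:
  assumes d: "r*b - a*s = 1" and c: "coprime (fst x) (snd x)"
  shows "coprime (Pf a b x) (Qf r s x)"
proof (rule coprimeI)
  fix c assume h: "c dvd Pf a b x" "c dvd Qf r s x"
  have "fst x = r * Pf a b x + a * Qf r s x"
    using recon[OF d] by simp
  then have "c dvd fst x" using h by simp
  have "snd x = s * Pf a b x + b * Qf r s x"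
    using recon[OF d] by simp
  then have "c dvd snd x" using h by simp
  show "is_unit c" using c \<open>c dvd fst x\<close> \<open>c dvd snd x\<close> by (rule coprime_common_divisor)
qed

lemma det_PQ:
  assumes d: "r*b - a*s = 1"
  shows "Pf a b x * Qf r s y - Qf r s x * Pf a b y = fst x * snd y - snd x * fst y"
proof -
  have "Pf a b x * Qf r s y - Qf r s x * Pf a b y = (r*b - a*s) * (fst x * snd y - snd x * fst y)"
    unfolding Pf_def Qf_def by (simp add: algebra_simps)
  then show ?thesis using d by simp
qed

lemma Q_zero:
  assumes d: "r*b - a*s = 1" and v: "(r,s) \<in> Fverts" and x: "x \<in> Fverts" and q: "Qf r s x = 0"
  shows "x = (r,s)"
proof -
  have cx: "coprime (fst x) (snd x)" using x by (auto simp: Fverts_def)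
  have "coprime (Pf a b x) 0" using coprime_PQ[OF d cx] q by simp
  then have "is_unit (Pf a b x)" by simp
  then have P: "Pf a b x = 1 \<or> Pf a b x = -1" by auto
  have "fst x = r * Pf a b x + a * Qf r s x"
    using recon[OF d] by simp
  moreover have "snd x = s * Pf a b x + b * Qf r s x"
    using recon[OF d] by simp
  ultimately have f: "fst x = r * Pf a b x" "snd x = s * Pf a b x" using q by simp_all
  show ?thesis
  proof (cases "Pf a b x = 1")
    case True then show ?thesis using f by (simp add: prod_eq_iff)
  next
    case False
    then have "Pf a b x = -1" using P by simp
    then have "fst x = -r" "snd x = -s" using f by simp_all
    then show ?thesis using v x by (auto simp: Fverts_def)
  qed
qed

definition nrm :: "int \<times> int \<Rightarrow> int \<times> int" where
  "nrm z = (if snd z < 0 \<or> (snd z = 0 \<and> fst z < 0) then (- fst z, - snd z) else z)"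

lemma nrm_Fverts:
  assumes "coprime (fst z) (snd z)"
  shows "nrm z \<in> Fverts"
proof -
  obtain x y where z: "z = (x,y)" by force
  have c: "coprime x y" using assms z by simp
  show ?thesis
  proof (cases "y = 0")
    case True
    then have "is_unit x" using c by simp
    then have "x = 1 \<or> x = -1" by auto
    then show ?thesis using True c z by (auto simp: nrm_def Fverts_def)
  qed (use c z in \<open>auto simp: nrm_def Fverts_def\<close>)
qed

lemma nrm_cases: "nrm z = z \<or> nrm z = (- fst z, - snd z)"
  by (simp add: nrm_def)

definition Inv :: "int \<Rightarrow> int \<Rightarrow> int \<Rightarrow> int \<Rightarrow> int \<Rightarrow> int \<times> int \<Rightarrow> bool" where
  "Inv k r s a b x \<longleftrightarrow> x \<in> Fverts \<and> k dvd Qf r s x \<and>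
     0 < Pf a b x * Qf r s x \<and> Pf a b x * Qf r s x < (Qf r s x)^2"

lemma Inv_nrm: "Inv k r s a b (nrm z) \<longleftrightarrow> nrm z \<in> Fverts \<and> k dvd Qf r s z \<and>
     0 < Pf a b z * Qf r s z \<and> Pf a b z * Qf r s z < (Qf r s z)^2"
proof -
  have P: "Pf a b (- fst z, - snd z) = - Pf a b z" by (simp add: Pf_def)
  have Q: "Qf r s (- fst z, - snd z) = - Qf r s z" by (simp add: Qf_def)
  show ?thesis using nrm_cases[of z] unfolding Inv_def
    by (elim disjE) (simp_all only: P Q, simp_all)
qed

lemma path_inv:
  assumes k: "k > 1" and d: "r*b - a*s = 1" and v: "(r,s) \<in> Fverts"
    and p: "conn_in k (S - {(r,s)}) u w" and iu: "Inv k r s a b u"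
  shows "Inv k r s a b w"
  using p[unfolded conn_in_def] iu
proof (induction rule: rtranclp_induct)
  case base
  then show ?case .
next
  case (step y z)
  have iy: "Inv k r s a b y" using step by simp
  have zF: "z \<in> Fverts" and yF: "y \<in> Fverts" and zv: "z \<noteq> (r,s)" and e0: "fdist y z = k"
    using step(2) by (auto simp: Fadj_def)
  have qz: "Qf r s z \<noteq> 0" using Q_zero[OF d v zF] zv by blast
  have cy: "coprime (Pf a b y) (Qf r s y)" using coprime_PQ[OF d] yF by (auto simp: Fverts_def)
  have cz: "coprime (Pf a b z) (Qf r s z)" using coprime_PQ[OF d] zF by (auto simp: Fverts_def)
  have e: "\<bar>Pf a b y * Qf r s z - Qf r s y * Pf a b z\<bar> = k"
    using e0 det_PQ[OF d, of y z] by (simp add: fdist_def)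
  show ?case
    using step_inv[OF k cy cz qz _ _ _ e] iy zF unfolding Inv_def by blast
qed


lemma nrm_fdist: "fdist x (nrm z) = fdist x z"
  using nrm_cases[of z] by (elim disjE) (simp_all add: fdist_def abs_minus_commute algebra_simps)

lemma nrm_Qf: "Qf r s (nrm z) = Qf r s z \<or> Qf r s (nrm z) = - Qf r s z"
  using nrm_cases[of z] by (elim disjE) (simp_all add: Qf_def)

lemma good_vertex:
  assumes k: "k > 1" and d: "r*b - a*s = 1" and v: "(r,s) \<in> Fverts"
    and P: "Pf a b z = 1 \<or> Pf a b z = -1" and Q: "Qf r s z = k"
  shows "nrm z \<in> Fcomponent k (r,s) - {(r,s)}" "nrm z \<in> Fverts"
proof -
  have cz: "coprime (fst z) (snd z)"
  proof (rule coprimeI)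
    fix c assume "c dvd fst z" "c dvd snd z"
    then have "c dvd Pf a b z" by (simp add: Pf_def)
    then show "is_unit c" using P by auto
  qed
  have F: "nrm z \<in> Fverts" by (rule nrm_Fverts[OF cz])
  have "fdist (r,s) (nrm z) = k" using Q k by (simp only: nrm_fdist) (simp add: fdist_def Qf_def)
  then have "Fadj k (r,s) (nrm z)" using F v by (simp add: Fadj_def)
  then have "nrm z \<in> Fcomponent k (r,s)" using v F
    unfolding Fcomponent_def conn_in_def by (auto intro: r_into_rtranclp)
  moreover have "nrm z \<noteq> (r,s)"
  proof
    assume "nrm z = (r,s)"
    then have "Qf r s (nrm z) = 0" by (simp add: Qf_def)
    then show False using nrm_Qf[of r s z] Q k by auto
  qed
  ultimately show "nrm z \<in> Fcomponent k (r,s) - {(r,s)}" by simp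
  show "nrm z \<in> Fverts" by (rule F)
qed

theorem proposition4p14:
  fixes k :: int and v :: "int \<times> int"
  assumes "k > 1" and "v \<in> Fverts"
  shows "\<exists>u w. u \<in> Fcomponent k v - {v} \<and> w \<in> Fcomponent k v - {v} \<and>
           \<not> conn_in k (Fcomponent k v - {v}) u w"
proof -
  obtain r s where v: "v = (r,s)" by force
  have c: "coprime r s" using assms(2) v by (simp add: Fverts_def)
  obtain x y where "x*r + y*s = gcd r s" using bezout_int by blast
  then have d: "r*x - (-y)*s = 1" using c by (simp add: algebra_simps)
  define a where "a = -y"
  define b where "b = x"
  have d: "r*b - a*s = 1" using d by (simp add: a_def b_def)
  define u0 where "u0 = (r + a*k, s + b*k)"
  define w0 where "w0 = (-r + a*k, -s + b*k)"
  have Pu: "Pf a b u0 = 1" using d by (simp add: Pf_def u0_def algebra_simps)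
  have Pw: "Pf a b w0 = -1" using d by (simp add: Pf_def w0_def algebra_simps)
  have "Qf r s u0 = k*(r*b - a*s)" by (simp add: Qf_def u0_def algebra_simps)
  then have Qu: "Qf r s u0 = k" using d by simp
  have "Qf r s w0 = k*(r*b - a*s)" by (simp add: Qf_def w0_def algebra_simps)
  then have Qw: "Qf r s w0 = k" using d by simp
  have vF: "(r,s) \<in> Fverts" using assms(2) v by simp
  have U: "nrm u0 \<in> Fcomponent k v - {v}" using good_vertex[OF assms(1) d vF _ Qu] Pu v by simp
  have UF: "nrm u0 \<in> Fverts" using good_vertex[OF assms(1) d vF _ Qu] Pu v by simp
  have W: "nrm w0 \<in> Fcomponent k v - {v}" using good_vertex[OF assms(1) d vF _ Qw] Pw v by simp
  have IU: "Inv k r s a b (nrm u0)" unfolding Inv_nrm using UF Pu Qu assms(1)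
    by (auto simp: power2_eq_square)
  have NW: "\<not> Inv k r s a b (nrm w0)" unfolding Inv_nrm using Pw Qw assms(1) by simp
  have "\<not> conn_in k (Fcomponent k v - {v}) (nrm u0) (nrm w0)"
  proof
    assume "conn_in k (Fcomponent k v - {v}) (nrm u0) (nrm w0)"
    then have "conn_in k (Fcomponent k v - {(r,s)}) (nrm u0) (nrm w0)" using v by simp
    from path_inv[OF assms(1) d vF this IU] NW show False by simp
  qed
  then show ?thesis using U W by blast
qed

end
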